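(* Let $M$ be an abelian group of exponent greater than $2$. Then for the loop $L_M$: $N_\lambda(L_M)=\{(A,x)\in L_M : x^2=1\}$, $N_\mu(L_M)=N_\rho(L_M)=\{(1,x): x\in M\}$, and $Z(L_M)=N(L_M)=C(L_M)=\{(1,x): x\in M,\ x^2=1\}$.
   Context: Let $K=\{1,a,b,c\}$ be the Klein four-group. Set $L_M=K\times M$ with the operation $(A,x)*(B,y)=(AB,xy)$ if $B=1$, and $(A,x)*(B,y)=(AB,x^{-1}y)$ if $B\neq 1$. For a loop $L$: the left nucleus is $N_\lambda(L)=\{u:(uy)z=u(yz)\ \forall y,z\}$, the middle nucleus $N_\mu(L)=\{u:(xu)z=x(uz)\ \forall x,z\}$, the right nucleus $N_\rho(L)=\{u:(xy)u=x(yu)\ \forall x,y\}$, the nucleus $N(L)=N_\lambda\cap N_\mu\cap N_\rho$, the commutant $C(L)=\{u: ux=xu\ \forall x\}$, and the center $Z(L)=N(L)\cap C(L)$. *)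

theory Defs
  imports "HOL-Algebra.Group"
begin

datatype klein = K1 | Ka | Kb | Kc

fun kmult :: "klein \<Rightarrow> klein \<Rightarrow> klein" where
  "kmult K1 y = y"
| "kmult x K1 = x"
| "kmult Ka Ka = K1" | "kmult Ka Kb = Kc" | "kmult Ka Kc = Kb"
| "kmult Kb Ka = Kc" | "kmult Kb Kb = K1" | "kmult Kb Kc = Ka"
| "kmult Kc Ka = Kb" | "kmult Kc Kb = Ka" | "kmult Kc Kc = K1"

definition LM_carrier :: "('a, 'b) monoid_scheme \<Rightarrow> (klein \<times> 'a) set" where
  "LM_carrier M = UNIV \<times> carrier M"

definition LM_mult :: "('a, 'b) monoid_scheme \<Rightarrow> klein \<times> 'a \<Rightarrow> klein \<times> 'a \<Rightarrow> klein \<times> 'a" where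
  "LM_mult M p q = (case p of (A, x) \<Rightarrow> case q of (B, y) \<Rightarrow>
     if B = K1 then (kmult A B, x \<otimes>\<^bsub>M\<^esub> y)
     else (kmult A B, inv\<^bsub>M\<^esub> x \<otimes>\<^bsub>M\<^esub> y))"

definition left_nucleus :: "'c set \<Rightarrow> ('c \<Rightarrow> 'c \<Rightarrow> 'c) \<Rightarrow> 'c set" where
  "left_nucleus S f = {u \<in> S. \<forall>y\<in>S. \<forall>z\<in>S. f (f u y) z = f u (f y z)}"

definition middle_nucleus :: "'c set \<Rightarrow> ('c \<Rightarrow> 'c \<Rightarrow> 'c) \<Rightarrow> 'c set" where
  "middle_nucleus S f = {u \<in> S. \<forall>x\<in>S. \<forall>z\<in>S. f (f x u) z = f x (f u z)}"

definition right_nucleus :: "'c set \<Rightarrow> ('c \<Rightarrow> 'c \<Rightarrow> 'c) \<Rightarrow> 'c set" where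
  "right_nucleus S f = {u \<in> S. \<forall>x\<in>S. \<forall>y\<in>S. f (f x y) u = f x (f y u)}"

definition nucleus :: "'c set \<Rightarrow> ('c \<Rightarrow> 'c \<Rightarrow> 'c) \<Rightarrow> 'c set" where
  "nucleus S f = left_nucleus S f \<inter> middle_nucleus S f \<inter> right_nucleus S f"

definition commutant :: "'c set \<Rightarrow> ('c \<Rightarrow> 'c \<Rightarrow> 'c) \<Rightarrow> 'c set" where
  "commutant S f = {u \<in> S. \<forall>x\<in>S. f u x = f x u}"

definition center :: "'c set \<Rightarrow> ('c \<Rightarrow> 'c \<Rightarrow> 'c) \<Rightarrow> 'c set" where
  "center S f = nucleus S f \<inter> commutant S f"

end

theory Submission
  imports Defs
begin

lemma kmult_assoc: "kmult (kmult A B) C = kmult A (kmult B C)"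
  by (cases A; cases B; cases C; simp)

lemma kmult_comm: "kmult A B = kmult B A"
  by (cases A; cases B; simp)

definition sg :: "('a, 'b) monoid_scheme \<Rightarrow> klein \<Rightarrow> 'a \<Rightarrow> 'a" where
  "sg M B x = (if B = K1 then x else inv\<^bsub>M\<^esub> x)"

lemma LM_mult_sg: "LM_mult M (A,x) (B,y) = (kmult A B, sg M B x \<otimes>\<^bsub>M\<^esub> y)"
  by (simp add: LM_mult_def sg_def)

context comm_group
begin

lemma sg_carrier[simp]: "x \<in> carrier G \<Longrightarrow> sg G B x \<in> carrier G"
  by (simp add: sg_def)

lemma sg_mult: "x \<in> carrier G \<Longrightarrow> y \<in> carrier G \<Longrightarrow> sg G C (x \<otimes> y) = sg G C x \<otimes> sg G C y"
  by (simp add: sg_def inv_mult)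

lemma sg_sg: "x \<in> carrier G \<Longrightarrow>
  (sg G C (sg G B x) = sg G (kmult B C) x) \<longleftrightarrow> (B = K1 \<or> C = K1 \<or> B = C \<or> inv x = x)"
  by (cases B; cases C; auto simp: sg_def eq_commute)

lemma assoc_iff:
  assumes "x \<in> carrier G" "y \<in> carrier G" "z \<in> carrier G"
  shows "(LM_mult G (LM_mult G (A,x) (B,y)) (C,z) = LM_mult G (A,x) (LM_mult G (B,y) (C,z)))
     \<longleftrightarrow> (B = K1 \<or> C = K1 \<or> B = C \<or> inv x = x)"
proof -
  have "sg G C (sg G B x \<otimes> y) \<otimes> z = sg G C (sg G B x) \<otimes> (sg G C y \<otimes> z)"
    using assms by (simp add: sg_mult m_assoc)
  moreover have "(sg G C (sg G B x) \<otimes> (sg G C y \<otimes> z) = sg G (kmult B C) x \<otimes> (sg G C y \<otimes> z))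
      \<longleftrightarrow> sg G C (sg G B x) = sg G (kmult B C) x"
    using assms by (intro right_cancel) auto
  ultimately show ?thesis using assms
    by (simp add: LM_mult_sg kmult_assoc sg_sg)
qed

lemma comm_iff:
  assumes "x \<in> carrier G" "y \<in> carrier G"
  shows "(LM_mult G (A,x) (B,y) = LM_mult G (B,y) (A,x)) \<longleftrightarrow> sg G B x \<otimes> y = sg G A y \<otimes> x"
  using assms by (simp add: LM_mult_sg kmult_comm)

lemma sq_iff: "x \<in> carrier G \<Longrightarrow> (x \<otimes> x = \<one>) \<longleftrightarrow> inv x = x"
  by (metis inv_equality inv_closed r_inv)

end

theorem proposition3p6:
  fixes M :: "('a, 'b) monoid_scheme"
  assumes "comm_group M"
    and "\<exists>x\<in>carrier M. x \<otimes>\<^bsub>M\<^esub> x \<noteq> \<one>\<^bsub>M\<^esub>"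
  shows "left_nucleus (LM_carrier M) (LM_mult M)
           = {(A, x). A \<in> UNIV \<and> x \<in> carrier M \<and> x \<otimes>\<^bsub>M\<^esub> x = \<one>\<^bsub>M\<^esub>}
    \<and> middle_nucleus (LM_carrier M) (LM_mult M) = {(K1, x) | x. x \<in> carrier M}
    \<and> right_nucleus (LM_carrier M) (LM_mult M) = {(K1, x) | x. x \<in> carrier M}
    \<and> center (LM_carrier M) (LM_mult M)
           = {(K1, x) | x. x \<in> carrier M \<and> x \<otimes>\<^bsub>M\<^esub> x = \<one>\<^bsub>M\<^esub>}
    \<and> nucleus (LM_carrier M) (LM_mult M)
           = {(K1, x) | x. x \<in> carrier M \<and> x \<otimes>\<^bsub>M\<^esub> x = \<one>\<^bsub>M\<^esub>}
    \<and> commutant (LM_carrier M) (LM_mult M)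
           = {(K1, x) | x. x \<in> carrier M \<and> x \<otimes>\<^bsub>M\<^esub> x = \<one>\<^bsub>M\<^esub>}"
proof -
  interpret comm_group M by (rule assms(1))
  obtain g where g: "g \<in> carrier M" "inv\<^bsub>M\<^esub> g \<noteq> g" using assms(2) sq_iff by blast
  have one: "\<one>\<^bsub>M\<^esub> \<in> carrier M" by simp
  have L: "left_nucleus (LM_carrier M) (LM_mult M)
           = {(A, x). A \<in> UNIV \<and> x \<in> carrier M \<and> x \<otimes>\<^bsub>M\<^esub> x = \<one>\<^bsub>M\<^esub>}"
  proof (rule Set.set_eqI)
    fix p :: "klein \<times> 'a"
    obtain A x where p: "p = (A,x)" by (cases p)
    show "(p \<in> left_nucleus (LM_carrier M) (LM_mult M)) = (p \<in> {(A, x). A \<in> UNIV \<and> x \<in> carrier M \<and> x \<otimes>\<^bsub>M\<^esub> x = \<one>\<^bsub>M\<^esub>})"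
      unfolding p
    proof
      assume h: "(A,x) \<in> left_nucleus (LM_carrier M) (LM_mult M)"
      hence x: "x \<in> carrier M" by (simp add: left_nucleus_def LM_carrier_def)
      from h have "LM_mult M (LM_mult M (A,x) (Ka,\<one>\<^bsub>M\<^esub>)) (Kb,\<one>\<^bsub>M\<^esub>) = LM_mult M (A,x) (LM_mult M (Ka,\<one>\<^bsub>M\<^esub>) (Kb,\<one>\<^bsub>M\<^esub>))"
        by (simp add: left_nucleus_def LM_carrier_def)
      hence "inv\<^bsub>M\<^esub> x = x" using assoc_iff[OF x one one] by simp
      thus "(A,x) \<in> {(A, x). A \<in> UNIV \<and> x \<in> carrier M \<and> x \<otimes>\<^bsub>M\<^esub> x = \<one>\<^bsub>M\<^esub>}" using x sq_iff by simp
    next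
      assume "(A,x) \<in> {(A, x). A \<in> UNIV \<and> x \<in> carrier M \<and> x \<otimes>\<^bsub>M\<^esub> x = \<one>\<^bsub>M\<^esub>}"
      hence x: "x \<in> carrier M" "inv\<^bsub>M\<^esub> x = x" using sq_iff by auto
      thus "(A,x) \<in> left_nucleus (LM_carrier M) (LM_mult M)"
        by (auto simp: left_nucleus_def LM_carrier_def assoc_iff)
    qed
  qed
  have Mi: "middle_nucleus (LM_carrier M) (LM_mult M) = {(K1, x) | x. x \<in> carrier M}"
  proof (rule Set.set_eqI)
    fix p :: "klein \<times> 'a"
    obtain B y where p: "p = (B,y)" by (cases p)
    show "(p \<in> middle_nucleus (LM_carrier M) (LM_mult M)) = (p \<in> {(K1, x) | x. x \<in> carrier M})"
      unfolding p
    proof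
      assume h: "(B,y) \<in> middle_nucleus (LM_carrier M) (LM_mult M)"
      hence y: "y \<in> carrier M" by (simp add: middle_nucleus_def LM_carrier_def)
      define C where "C = (if B = Ka then Kb else Ka)"
      have C: "C \<noteq> K1" "C \<noteq> B" by (auto simp: C_def)
      from h have "LM_mult M (LM_mult M (K1,g) (B,y)) (C,\<one>\<^bsub>M\<^esub>) = LM_mult M (K1,g) (LM_mult M (B,y) (C,\<one>\<^bsub>M\<^esub>))"
        using g by (simp add: middle_nucleus_def LM_carrier_def)
      hence "B = K1" using assoc_iff[OF g(1) y one] C g by auto
      thus "(B,y) \<in> {(K1, x) | x. x \<in> carrier M}" using y by simp
    next
      assume "(B,y) \<in> {(K1, x) | x. x \<in> carrier M}"
      thus "(B,y) \<in> middle_nucleus (LM_carrier M) (LM_mult M)"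
        by (auto simp: middle_nucleus_def LM_carrier_def assoc_iff)
    qed
  qed
  have R: "right_nucleus (LM_carrier M) (LM_mult M) = {(K1, x) | x. x \<in> carrier M}"
  proof (rule Set.set_eqI)
    fix p :: "klein \<times> 'a"
    obtain C z where p: "p = (C,z)" by (cases p)
    show "(p \<in> right_nucleus (LM_carrier M) (LM_mult M)) = (p \<in> {(K1, x) | x. x \<in> carrier M})"
      unfolding p
    proof
      assume h: "(C,z) \<in> right_nucleus (LM_carrier M) (LM_mult M)"
      hence z: "z \<in> carrier M" by (simp add: right_nucleus_def LM_carrier_def)
      define B where "B = (if C = Ka then Kb else Ka)"
      have B: "B \<noteq> K1" "B \<noteq> C" by (auto simp: B_def)
      from h have "LM_mult M (LM_mult M (K1,g) (B,\<one>\<^bsub>M\<^esub>)) (C,z) = LM_mult M (K1,g) (LM_mult M (B,\<one>\<^bsub>M\<^esub>) (C,z))"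
        using g by (simp add: right_nucleus_def LM_carrier_def)
      hence "C = K1" using assoc_iff[OF g(1) one z] B g by auto
      thus "(C,z) \<in> {(K1, x) | x. x \<in> carrier M}" using z by simp
    next
      assume "(C,z) \<in> {(K1, x) | x. x \<in> carrier M}"
      thus "(C,z) \<in> right_nucleus (LM_carrier M) (LM_mult M)"
        by (auto simp: right_nucleus_def LM_carrier_def assoc_iff)
    qed
  qed
  have N: "nucleus (LM_carrier M) (LM_mult M)
           = {(K1, x) | x. x \<in> carrier M \<and> x \<otimes>\<^bsub>M\<^esub> x = \<one>\<^bsub>M\<^esub>}"
    unfolding nucleus_def L Mi R by auto
  have C: "commutant (LM_carrier M) (LM_mult M)
           = {(K1, x) | x. x \<in> carrier M \<and> x \<otimes>\<^bsub>M\<^esub> x = \<one>\<^bsub>M\<^esub>}"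
  proof (rule Set.set_eqI)
    fix p :: "klein \<times> 'a"
    obtain A x where p: "p = (A,x)" by (cases p)
    show "(p \<in> commutant (LM_carrier M) (LM_mult M)) = (p \<in> {(K1, x) | x. x \<in> carrier M \<and> x \<otimes>\<^bsub>M\<^esub> x = \<one>\<^bsub>M\<^esub>})"
      unfolding p
    proof
      assume h: "(A,x) \<in> commutant (LM_carrier M) (LM_mult M)"
      hence x: "x \<in> carrier M" by (simp add: commutant_def LM_carrier_def)
      from h have c1: "LM_mult M (A,x) (K1,g) = LM_mult M (K1,g) (A,x)"
        using g by (simp add: commutant_def LM_carrier_def)
      have A: "A = K1"
      proof (rule ccontr)
        assume "A \<noteq> K1"
        hence "x \<otimes>\<^bsub>M\<^esub> g = inv\<^bsub>M\<^esub> g \<otimes>\<^bsub>M\<^esub> x" using c1 comm_iff[OF x g(1)] by (simp add: sg_def)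
        hence "x \<otimes>\<^bsub>M\<^esub> g = x \<otimes>\<^bsub>M\<^esub> inv\<^bsub>M\<^esub> g" using x g(1) by (simp add: m_comm)
        hence "g = inv\<^bsub>M\<^esub> g" using x g(1) by simp
        thus False using g by simp
      qed
      from h have "LM_mult M (A,x) (Ka,\<one>\<^bsub>M\<^esub>) = LM_mult M (Ka,\<one>\<^bsub>M\<^esub>) (A,x)"
        by (simp add: commutant_def LM_carrier_def)
      hence "inv\<^bsub>M\<^esub> x = x" using comm_iff[OF x one] A x by (simp add: sg_def)
      thus "(A,x) \<in> {(K1, x) | x. x \<in> carrier M \<and> x \<otimes>\<^bsub>M\<^esub> x = \<one>\<^bsub>M\<^esub>}" using A x sq_iff by simp
    next
      assume "(A,x) \<in> {(K1, x) | x. x \<in> carrier M \<and> x \<otimes>\<^bsub>M\<^esub> x = \<one>\<^bsub>M\<^esub>}"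
      hence x: "A = K1" "x \<in> carrier M" "inv\<^bsub>M\<^esub> x = x" using sq_iff by auto
      thus "(A,x) \<in> commutant (LM_carrier M) (LM_mult M)"
        by (auto simp: commutant_def LM_carrier_def comm_iff sg_def m_comm)
    qed
  qed
  have Z: "center (LM_carrier M) (LM_mult M)
           = {(K1, x) | x. x \<in> carrier M \<and> x \<otimes>\<^bsub>M\<^esub> x = \<one>\<^bsub>M\<^esub>}"
    unfolding center_def N C by simp
  show ?thesis using L Mi R N C Z by blast
qed

end
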